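(* Let $d\ge1$, let $|\cdot|$ be any norm on $\mathbb{R}^d$, let $p\in(0,+\infty)$ and let $X$ be an $\mathbb{R}^d$-valued random vector with distribution $\mu$ such that $\int_{\mathbb{R}^d}|\xi|^p\mu(d\xi)<+\infty$. Let $(a_N)_{N\ge1}$ be an $L^p$-optimal greedy quantization sequence for $X$. Assume that there exists $b\in(0,\tfrac12)$ such that the $b$-maximal function $\Psi_b$ associated with $(a_N)_{N\ge1}$ satisfies $\int_{\mathbb{R}^d}\Psi_b^{\frac{p}{p+d}}\,d\mu<+\infty$. Then $$\limsup_{N\to+\infty}N^{\frac1d}\,e_p(a^{(N)},X)<+\infty.$$
   Context: For $\Gamma\subset\mathbb{R}^d$ and $r>0$ put $e_r(\Gamma,X)=\big(\mathbb{E}\,d(X,\Gamma)^r\big)^{1/r}$ with $d(\xi,\Gamma)=\inf_{a\in\Gamma}|\xi-a|$ ($d(\xi,\emptyset)=+\infty$). A sequence $(a_N)_{N\ge1}$ in $\mathbb{R}^d$ is an $L^p$-optimal greedy quantization sequence if, writing $a^{(N)}=\{a_1,\dots,a_N\}$ and $a^{(0)}=\emptyset$, one has $a_{N+1}\in\operatorname{argmin}_{\xi\in\mathbb{R}^d}e_p(a^{(N)}\cup\{\xi\},X)$ for every $N\ge0$. For $b\in(0,\frac12)$, the $b$-maximal function associated with $(a_N)$ is $$\Psi_b(\xi)=\sup_{N\ge1}\frac{\lambda_d\big(B(\xi,b\,d(\xi,a^{(N)}))\big)}{\mu\big(B(\xi,b\,d(\xi,a^{(N)}))\big)}\in[0,+\infty],\quad\xi\in\mathbb{R}^d,$$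 where $\lambda_d$ is Lebesgue measure, $B(x,\rho)$ is the closed ball of center $x$ and radius $\rho$ for $|\cdot|$, and $\frac{0}{0}$, $\frac{c}{0}$ are interpreted with the conventions $\frac10=+\infty$. *)

theory Defs
  imports "HOL-Probability.Probability"
begin

definition is_norm :: "('a::real_vector \<Rightarrow> real) \<Rightarrow> bool" where
  "is_norm nrm \<longleftrightarrow> (\<forall>x. nrm x = 0 \<longleftrightarrow> x = 0) \<and> (\<forall>x y. nrm (x + y) \<le> nrm x + nrm y)
     \<and> (\<forall>c x. nrm (c *\<^sub>R x) = \<bar>c\<bar> * nrm x)"

definition epow :: "ennreal \<Rightarrow> real \<Rightarrow> ennreal" where
  "epow x r = (if x = \<infinity> then \<infinity> else ennreal (enn2real x powr r))"

text \<open>d(xi, Gamma) = inf over a in Gamma of |xi - a|; d(xi, {}) = +infinity.\<close>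
definition dist_set :: "('a::real_vector \<Rightarrow> real) \<Rightarrow> 'a \<Rightarrow> 'a set \<Rightarrow> ennreal" where
  "dist_set nrm \<xi> \<Gamma> = (INF a\<in>\<Gamma>. ennreal (nrm (\<xi> - a)))"

definition quant_err :: "('a::real_vector \<Rightarrow> real) \<Rightarrow> real \<Rightarrow> 'b measure \<Rightarrow> ('b \<Rightarrow> 'a) \<Rightarrow> 'a set \<Rightarrow> ennreal" where
  "quant_err nrm r M X \<Gamma> = epow (\<integral>\<^sup>+ \<omega>. epow (dist_set nrm (X \<omega>) \<Gamma>) r \<partial>M) (1 / r)"

definition first_pts :: "(nat \<Rightarrow> 'a) \<Rightarrow> nat \<Rightarrow> 'a set" where
  "first_pts a N = a ` {1..N}"

definition greedy_opt_seq :: "('a::real_vector \<Rightarrow> real) \<Rightarrow> real \<Rightarrow> 'b measure \<Rightarrow> ('b \<Rightarrow> 'a) \<Rightarrow> (nat \<Rightarrow> 'a) \<Rightarrow> bool" where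
  "greedy_opt_seq nrm p M X a \<longleftrightarrow>
     (\<forall>N. \<forall>\<xi>. quant_err nrm p M X (first_pts a N \<union> {a (Suc N)})
                \<le> quant_err nrm p M X (first_pts a N \<union> {\<xi>}))"

definition nball :: "('a::real_vector \<Rightarrow> real) \<Rightarrow> 'a \<Rightarrow> real \<Rightarrow> 'a set" where
  "nball nrm x \<rho> = {y. nrm (y - x) \<le> \<rho>}"

text \<open>b-maximal function; division in [0,+infinity] (c/0 = +infinity for c > 0, 0/0 = 0).\<close>
definition max_fun :: "('a::euclidean_space \<Rightarrow> real) \<Rightarrow> 'a measure \<Rightarrow> (nat \<Rightarrow> 'a) \<Rightarrow> real \<Rightarrow> 'a \<Rightarrow> ennreal" where
  "max_fun nrm \<mu> a b \<xi> =
     (SUP N\<in>{1..}. emeasure lborel (nball nrm \<xi> (b * enn2real (dist_set nrm \<xi> (first_pts a N))))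
                 / emeasure \<mu> (nball nrm \<xi> (b * enn2real (dist_set nrm \<xi> (first_pts a N)))))"

end

theory Submission
  imports Defs
begin
lemma nrm_0: "is_norm nrm \<Longrightarrow> nrm 0 = 0" by (simp add: is_norm_def)

lemma nrm_tri: "is_norm nrm \<Longrightarrow> nrm (x + y) \<le> nrm x + nrm y" by (simp add: is_norm_def)

lemma nrm_scale: "is_norm nrm \<Longrightarrow> nrm (c *\<^sub>R x) = \<bar>c\<bar> * nrm x" by (simp add: is_norm_def)

lemma nrm_neg: "is_norm nrm \<Longrightarrow> nrm (- x) = nrm x"
  using nrm_scale[of nrm "-1" x] by simp

lemma nrm_nonneg: assumes "is_norm nrm" shows "nrm x \<ge> 0"
proof -
  have "nrm (x + - x) \<le> nrm x + nrm (-x)" by (rule nrm_tri[OF assms])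
  then show ?thesis using nrm_0[OF assms] nrm_neg[OF assms] by simp
qed

lemma nrm_commute: assumes "is_norm nrm" shows "nrm (x - y) = nrm (y - x)"
  using nrm_neg[OF assms, of "y - x"] by simp

lemma nrm_tri': assumes "is_norm nrm" shows "nrm (x - z) \<le> nrm (x - y) + nrm (y - z)"
  using nrm_tri[OF assms, of "x - y" "y - z"] by simp

lemma nrm_pos: assumes "is_norm nrm" "x \<noteq> 0" shows "nrm x > 0"
  using nrm_nonneg[OF assms(1), of x] assms by (auto simp: is_norm_def)

lemma nrm_sum: assumes "is_norm nrm" "finite S" shows "nrm (sum f S) \<le> (\<Sum>i\<in>S. nrm (f i))"
  using assms(2)
proof (induction S rule: finite_induct)
  case empty then show ?case using nrm_0[OF assms(1)] by simp
next
  case (insert x F)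
  then show ?case using nrm_tri[OF assms(1), of "f x" "sum f F"] by simp
qed

lemma nrm_le_basis: fixes x :: "'a::euclidean_space"
  assumes "is_norm nrm" shows "nrm x \<le> (\<Sum>b\<in>Basis. \<bar>x \<bullet> b\<bar> * nrm b)"
proof -
  have "nrm x = nrm (\<Sum>b\<in>Basis. (x \<bullet> b) *\<^sub>R b)" by (simp add: euclidean_representation)
  also have "\<dots> \<le> (\<Sum>b\<in>Basis. nrm ((x \<bullet> b) *\<^sub>R b))" by (rule nrm_sum[OF assms]) simp
  also have "\<dots> = (\<Sum>b\<in>Basis. \<bar>x \<bullet> b\<bar> * nrm b)" by (simp add: nrm_scale[OF assms])
  finally show ?thesis .
qed

definition nC :: "('a::euclidean_space \<Rightarrow> real) \<Rightarrow> real" where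
  "nC nrm = (\<Sum>b\<in>Basis. nrm b)"

lemma nC_pos: assumes "is_norm nrm" shows "nC (nrm :: 'a::euclidean_space \<Rightarrow> real) > 0"
proof -
  obtain b :: 'a where b: "b \<in> Basis" using nonempty_Basis by blast
  have "nrm b > 0" using nrm_pos[OF assms] b by (metis nonzero_Basis)
  moreover have "(\<Sum>b\<in>Basis. nrm b) \<ge> nrm b" using b
    by (intro member_le_sum) (auto simp: nrm_nonneg[OF assms])
  ultimately show ?thesis unfolding nC_def by linarith
qed

lemma nrm_le_norm: fixes x :: "'a::euclidean_space"
  assumes "is_norm nrm" shows "nrm x \<le> nC nrm * norm x"
proof -
  have "nrm x \<le> (\<Sum>b\<in>Basis. \<bar>x \<bullet> b\<bar> * nrm b)" by (rule nrm_le_basis[OF assms])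
  also have "\<dots> \<le> (\<Sum>b\<in>Basis. norm x * nrm b)"
    by (intro sum_mono mult_right_mono) (auto simp: Basis_le_norm nrm_nonneg[OF assms])
  also have "\<dots> = nC nrm * norm x" by (simp add: nC_def sum_distrib_left mult.commute)
  finally show ?thesis .
qed

lemma nrm_cube: fixes x \<xi> :: "'a::euclidean_space"
  assumes "is_norm nrm" "\<And>b. b \<in> Basis \<Longrightarrow> \<bar>x \<bullet> b\<bar> \<le> t"
  shows "nrm x \<le> t * nC nrm"
proof -
  have "nrm x \<le> (\<Sum>b\<in>Basis. \<bar>x \<bullet> b\<bar> * nrm b)" by (rule nrm_le_basis[OF assms(1)])
  also have "\<dots> \<le> (\<Sum>b\<in>Basis. t * nrm b)"
    by (intro sum_mono mult_right_mono) (auto simp: assms(2) nrm_nonneg[OF assms(1)])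
  also have "\<dots> = t * nC nrm" by (simp add: nC_def sum_distrib_left)
  finally show ?thesis .
qed

lemma nrm_continuous: fixes nrm :: "'a::euclidean_space \<Rightarrow> real"
  assumes "is_norm nrm" shows "continuous_on UNIV nrm"
  unfolding continuous_on_iff
proof (intro ballI allI impI)
  fix x e assume "(e::real) > 0"
  have C: "nC nrm > 0" by (rule nC_pos[OF assms])
  show "\<exists>d>0. \<forall>x'\<in>UNIV. dist x' x < d \<longrightarrow> dist (nrm x') (nrm x) < e"
  proof (intro exI[of _ "e / nC nrm"] conjI ballI impI)
    show "e / nC nrm > 0" using C \<open>e > 0\<close> by simp
    fix y assume "dist y x < e / nC nrm"
    then have "nC nrm * norm (y - x) < e" using C by (simp add: dist_norm field_simps)
    moreover have "\<bar>nrm y - nrm x\<bar> \<le> nrm (y - x)"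
      using nrm_tri'[OF assms, of y 0 x] nrm_tri'[OF assms, of x 0 y] nrm_commute[OF assms, of x y]
      by (simp add: abs_le_iff)
    moreover have "nrm (y - x) \<le> nC nrm * norm (y - x)" by (rule nrm_le_norm[OF assms])
    ultimately show "dist (nrm y) (nrm x) < e" by (simp add: dist_real_def)
  qed
qed

lemma nrm_measurable[measurable]: fixes nrm :: "'a::euclidean_space \<Rightarrow> real"
  assumes "is_norm nrm" shows "nrm \<in> borel_measurable borel"
  using nrm_continuous[OF assms] by (rule borel_measurable_continuous_onI)

definition Fd :: "('a::real_vector \<Rightarrow> real) \<Rightarrow> 'a set \<Rightarrow> 'a \<Rightarrow> real" where
  "Fd nrm \<Gamma> \<eta> = Min ((\<lambda>x. nrm (\<eta> - x)) ` \<Gamma>)"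

lemma dist_set_fin:
  assumes "finite \<Gamma>" "\<Gamma> \<noteq> {}"
  shows "dist_set nrm \<eta> \<Gamma> = ennreal (Fd nrm \<Gamma> \<eta>)"
proof -
  have "dist_set nrm \<eta> \<Gamma> = Min ((\<lambda>x. ennreal (nrm (\<eta> - x))) ` \<Gamma>)"
    unfolding dist_set_def using assms by (simp add: Min_Inf)
  also have "\<dots> = Min (ennreal ` ((\<lambda>x. nrm (\<eta> - x)) ` \<Gamma>))" by (simp add: image_image)
  also have "\<dots> = ennreal (Fd nrm \<Gamma> \<eta>)" unfolding Fd_def
    using assms by (intro mono_Min_commute[symmetric]) (auto simp: mono_def ennreal_leI)
  finally show ?thesis .
qed

lemma Fd_le: "finite \<Gamma> \<Longrightarrow> x \<in> \<Gamma> \<Longrightarrow> Fd nrm \<Gamma> \<eta> \<le> nrm (\<eta> - x)"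
  unfolding Fd_def by (rule Min_le) auto

lemma Fd_in: "finite \<Gamma> \<Longrightarrow> \<Gamma> \<noteq> {} \<Longrightarrow> \<exists>x\<in>\<Gamma>. Fd nrm \<Gamma> \<eta> = nrm (\<eta> - x)"
proof -
  assume a: "finite \<Gamma>" "\<Gamma> \<noteq> {}"
  have "Min ((\<lambda>x. nrm (\<eta> - x)) ` \<Gamma>) \<in> (\<lambda>x. nrm (\<eta> - x)) ` \<Gamma>"
    using a by (intro Min_in) auto
  then show ?thesis unfolding Fd_def by auto
qed

lemma Fd_nonneg: "is_norm nrm \<Longrightarrow> finite \<Gamma> \<Longrightarrow> \<Gamma> \<noteq> {} \<Longrightarrow> Fd nrm \<Gamma> \<eta> \<ge> 0"
  using Fd_in[of \<Gamma> nrm \<eta>] nrm_nonneg by fastforce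

lemma Fd_insert: "finite \<Gamma> \<Longrightarrow> \<Gamma> \<noteq> {} \<Longrightarrow> Fd nrm (insert x \<Gamma>) \<eta> = min (nrm (\<eta> - x)) (Fd nrm \<Gamma> \<eta>)"
  unfolding Fd_def by (simp add: Min_insert)

lemma Fd_insert_le: "finite \<Gamma> \<Longrightarrow> \<Gamma> \<noteq> {} \<Longrightarrow> Fd nrm (insert x \<Gamma>) \<eta> \<le> Fd nrm \<Gamma> \<eta>"
  by (simp add: Fd_insert)

lemma Fd_measurable[measurable]:
  fixes nrm :: "'a::euclidean_space \<Rightarrow> real"
  assumes "is_norm nrm" "finite \<Gamma>" "\<Gamma> \<noteq> {}"
  shows "Fd nrm \<Gamma> \<in> borel_measurable borel"
  using assms(2,3)
proof (induction \<Gamma> rule: finite_ne_induct)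
  case (singleton x)
  have "(\<lambda>\<eta>. nrm (\<eta> - x)) \<in> borel_measurable borel"
    using nrm_measurable[OF assms(1)] by measurable
  then show ?case by (simp add: Fd_def)
next
  case (insert x F)
  have "(\<lambda>\<eta>. nrm (\<eta> - x)) \<in> borel_measurable borel"
    using nrm_measurable[OF assms(1)] by measurable
  then have "(\<lambda>\<eta>. min (nrm (\<eta> - x)) (Fd nrm F \<eta>)) \<in> borel_measurable borel"
    using insert.IH by measurable
  then show ?case using insert by (simp add: Fd_insert)
qed

lemma epow_ennreal: "t \<ge> 0 \<Longrightarrow> epow (ennreal t) r = ennreal (t powr r)"
  by (simp add: epow_def)

lemma epow_reflect:
  assumes "r > 0" "epow x r \<le> epow y r" shows "x \<le> y"
proof (cases "y = \<infinity>")
  case True then show ?thesis by simp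
next
  case False
  then have "epow y r \<noteq> \<infinity>" by (simp add: epow_def)
  then have "x \<noteq> \<infinity>" using assms(2) by (auto simp: epow_def top_unique)
  then have "enn2real x powr r \<le> enn2real y powr r"
    using assms False by (simp add: epow_def ennreal_le_iff)
  then have "enn2real x \<le> enn2real y"
  proof (rule contrapos_pp)
    assume "\<not> enn2real x \<le> enn2real y"
    then have "enn2real y powr r < enn2real x powr r"
      using assms(1) by (intro powr_less_mono2) auto
    then show "\<not> enn2real x powr r \<le> enn2real y powr r" by simp
  qed
  then have "ennreal (enn2real x) \<le> ennreal (enn2real y)" by (rule ennreal_leI)
  then show ?thesis using False \<open>x \<noteq> \<infinity>\<close> by (simp add: ennreal_enn2real_if)
qed

lemma first_pts_finite: "finite (first_pts a N)" by (simp add: first_pts_def)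
lemma first_pts_ne: "N \<ge> 1 \<Longrightarrow> first_pts a N \<noteq> {}" by (auto simp: first_pts_def)
lemma first_pts_Suc: "first_pts a (Suc N) = insert (a (Suc N)) (first_pts a N)"
  by (auto simp: first_pts_def atLeastAtMostSuc_conv)
lemma first_pts_mono: "M \<le> N \<Longrightarrow> first_pts a M \<subseteq> first_pts a N"
  by (auto simp: first_pts_def)

lemma powr_sum_le: fixes x y p :: real assumes "x \<ge> 0" "y \<ge> 0" "p > 0"
  shows "(x + y) powr p \<le> 2 powr p * (x powr p + y powr p)"
proof -
  have "(x + y) powr p \<le> (2 * max x y) powr p" using assms by (intro powr_mono2) auto
  also have "\<dots> = 2 powr p * max x y powr p" using assms by (simp add: powr_mult)
  also have "max x y powr p \<le> x powr p + y powr p" by (simp add: max_def)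
  finally show ?thesis by (simp add: mult_left_mono)
qed

definition Ip :: "('a::euclidean_space \<Rightarrow> real) \<Rightarrow> real \<Rightarrow> 'a measure \<Rightarrow> 'a set \<Rightarrow> ennreal" where
  "Ip nrm p \<mu> \<Gamma> = (\<integral>\<^sup>+ \<xi>. ennreal (Fd nrm \<Gamma> \<xi> powr p) \<partial>\<mu>)"

lemma nball_closed: fixes nrm :: "'a::euclidean_space \<Rightarrow> real"
  assumes "is_norm nrm" shows "closed (nball nrm x r)"
proof -
  have c1: "continuous_on UNIV (\<lambda>y::'a. y - x)" by (intro continuous_intros)
  have c2: "continuous_on ((\<lambda>y::'a. y - x) ` UNIV) nrm"
    by (rule continuous_on_subset[OF nrm_continuous[OF assms]]) simp
  have "continuous_on UNIV (\<lambda>y. nrm (y - x))"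
    using continuous_on_compose[OF c1 c2] by (simp add: o_def)
  moreover have "nball nrm x r = {y. nrm (y - x) \<le> r}" by (simp add: nball_def)
  ultimately show ?thesis
    using closed_Collect_le[OF _ continuous_on_const, of "\<lambda>y. nrm (y - x)" r] by simp
qed

lemma nball_borel: fixes nrm :: "'a::euclidean_space \<Rightarrow> real"
  assumes "is_norm nrm" shows "nball nrm x r \<in> sets borel"
  using nball_closed[OF assms] by (rule borel_closed)

context
  fixes nrm :: "'a::euclidean_space \<Rightarrow> real" and p :: real and M :: "'b measure"
    and X :: "'b \<Rightarrow> 'a" and a :: "nat \<Rightarrow> 'a"
  assumes nrm: "is_norm nrm" and p: "p > 0" and M: "prob_space M" and X: "X \<in> borel_measurable M"
    and mom: "(\<integral>\<^sup>+ \<xi>. ennreal (nrm \<xi> powr p) \<partial>(distr M borel X)) < \<infinity>"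
    and greedy: "greedy_opt_seq nrm p M X a"
begin

lemma mu_prob: "prob_space (distr M borel X)"
  using prob_space.prob_space_distr[OF M X] .

lemma qe_eq:
  assumes "finite \<Gamma>" "\<Gamma> \<noteq> {}"
  shows "quant_err nrm p M X \<Gamma> = epow (Ip nrm p (distr M borel X) \<Gamma>) (1/p)"
proof -
  have m: "(\<lambda>\<xi>. ennreal (Fd nrm \<Gamma> \<xi> powr p)) \<in> borel_measurable borel"
    using Fd_measurable[OF nrm assms] by measurable
  have "Ip nrm p (distr M borel X) \<Gamma> = (\<integral>\<^sup>+ \<omega>. ennreal (Fd nrm \<Gamma> (X \<omega>) powr p) \<partial>M)"
    unfolding Ip_def using m by (subst nn_integral_distr[OF X]) auto
  also have "\<dots> = (\<integral>\<^sup>+ \<omega>. epow (dist_set nrm (X \<omega>) \<Gamma>) p \<partial>M)"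
    using assms by (simp add: dist_set_fin epow_ennreal Fd_nonneg[OF nrm])
  finally show ?thesis unfolding quant_err_def by simp
qed

lemma Ip_fin:
  assumes "finite \<Gamma>" "\<Gamma> \<noteq> {}"
  shows "Ip nrm p (distr M borel X) \<Gamma> < \<infinity>"
proof -
  interpret P: prob_space "distr M borel X" by (rule mu_prob)
  obtain x0 where x0: "x0 \<in> \<Gamma>" using assms by blast
  have nm: "(\<lambda>\<xi>. ennreal (nrm \<xi> powr p)) \<in> borel_measurable (distr M borel X)"
    using nrm_measurable[OF nrm] by measurable
  have pt: "ennreal (Fd nrm \<Gamma> \<xi> powr p) \<le> ennreal (2 powr p) * (ennreal (nrm \<xi> powr p) + ennreal (nrm x0 powr p))" for \<xi>
  proof -
    have "Fd nrm \<Gamma> \<xi> \<le> nrm (\<xi> - x0)" by (rule Fd_le[OF assms(1) x0])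
    also have "\<dots> \<le> nrm \<xi> + nrm x0"
      using nrm_tri'[OF nrm, of \<xi> x0 0] nrm_neg[OF nrm, of x0] by simp
    finally have "Fd nrm \<Gamma> \<xi> powr p \<le> (nrm \<xi> + nrm x0) powr p"
      using Fd_nonneg[OF nrm assms] p by (intro powr_mono2) auto
    also have "\<dots> \<le> 2 powr p * (nrm \<xi> powr p + nrm x0 powr p)"
      using nrm_nonneg[OF nrm] p by (intro powr_sum_le) auto
    finally have le: "Fd nrm \<Gamma> \<xi> powr p \<le> 2 powr p * (nrm \<xi> powr p + nrm x0 powr p)" .
    have e: "ennreal (2 powr p) * (ennreal (nrm \<xi> powr p) + ennreal (nrm x0 powr p))
       = ennreal (2 powr p * (nrm \<xi> powr p + nrm x0 powr p))"
      by (simp add: ennreal_mult)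
    show ?thesis unfolding e by (rule ennreal_leI[OF le])
  qed
  have "Ip nrm p (distr M borel X) \<Gamma> \<le> (\<integral>\<^sup>+ \<xi>. ennreal (2 powr p) * (ennreal (nrm \<xi> powr p) + ennreal (nrm x0 powr p)) \<partial>(distr M borel X))"
    unfolding Ip_def by (intro nn_integral_mono pt)
  also have "\<dots> = ennreal (2 powr p) * ((\<integral>\<^sup>+ \<xi>. ennreal (nrm \<xi> powr p) \<partial>(distr M borel X)) + ennreal (nrm x0 powr p))"
    using nm P.emeasure_space_1 by (simp add: nn_integral_cmult nn_integral_add)
  also have "\<dots> < \<infinity>" using mom by (simp add: ennreal_mult_less_top)
  finally show ?thesis .
qed

lemma greedy_Ip:
  "Ip nrm p (distr M borel X) (first_pts a (Suc N)) \<le> Ip nrm p (distr M borel X) (insert \<xi> (first_pts a N))"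
proof -
  have "quant_err nrm p M X (first_pts a N \<union> {a (Suc N)}) \<le> quant_err nrm p M X (first_pts a N \<union> {\<xi>})"
    using greedy[unfolded greedy_opt_seq_def, rule_format, of N \<xi>] .
  then have "quant_err nrm p M X (first_pts a (Suc N)) \<le> quant_err nrm p M X (insert \<xi> (first_pts a N))"
    by (simp only: first_pts_Suc Un_insert_right Un_empty_right)
  moreover have ne: "first_pts a (Suc N) \<noteq> {}" by (rule first_pts_ne) simp
  moreover have f2: "finite (insert \<xi> (first_pts a N))" by (simp add: first_pts_finite)
  ultimately have "epow (Ip nrm p (distr M borel X) (first_pts a (Suc N))) (1/p) \<le> epow (Ip nrm p (distr M borel X) (insert \<xi> (first_pts a N))) (1/p)"
    by (simp only: qe_eq[OF first_pts_finite ne, symmetric] qe_eq[OF f2 insert_not_empty, symmetric])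
  moreover have "1/p > 0" using p by simp
  ultimately show ?thesis by (rule epow_reflect[rotated])
qed

lemma micro_macro:
  assumes N: "N \<ge> 1" and b: "0 \<le> b" "b \<le> 1/2"
  shows "Ip nrm p (distr M borel X) (first_pts a (Suc N))
     + ennreal (((1-b) powr p - b powr p) * Fd nrm (first_pts a N) \<xi> powr p)
       * emeasure (distr M borel X) (nball nrm \<xi> (b * Fd nrm (first_pts a N) \<xi>))
     \<le> Ip nrm p (distr M borel X) (first_pts a N)"
proof -
  define \<Gamma> where "\<Gamma> = first_pts a N"
  define \<delta> where "\<delta> = Fd nrm \<Gamma> \<xi>"
  define c where "c = (1-b) powr p - b powr p"
  define B where "B = nball nrm \<xi> (b * \<delta>)"
  define \<mu> where "\<mu> = distr M borel X"
  have fin: "finite \<Gamma>" and ne: "\<Gamma> \<noteq> {}" using N by (auto simp: \<Gamma>_def first_pts_finite first_pts_ne)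
  have \<delta>0: "\<delta> \<ge> 0" unfolding \<delta>_def by (rule Fd_nonneg[OF nrm fin ne])
  have c0: "c \<ge> 0" unfolding c_def using b p by (auto intro!: powr_mono2)
  have Bm: "B \<in> sets \<mu>" unfolding B_def \<mu>_def using nball_borel[OF nrm] by simp
  have "Fd nrm (insert \<xi> \<Gamma>) \<in> borel_measurable borel"
    using fin by (intro Fd_measurable[OF nrm]) auto
  then have "(\<lambda>\<eta>. ennreal (Fd nrm (insert \<xi> \<Gamma>) \<eta> powr p)) \<in> borel_measurable borel"
    by measurable
  then have m1: "(\<lambda>\<eta>. ennreal (Fd nrm (insert \<xi> \<Gamma>) \<eta> powr p)) \<in> borel_measurable \<mu>"
    unfolding \<mu>_def by (subst measurable_cong_sets[of _ borel _ borel]) auto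
  have m2: "(\<lambda>\<eta>. ennreal (c * \<delta> powr p) * indicator B \<eta>) \<in> borel_measurable \<mu>"
    using Bm by measurable
  have pt: "ennreal (Fd nrm (insert \<xi> \<Gamma>) \<eta> powr p) + ennreal (c * \<delta> powr p) * indicator B \<eta>
      \<le> ennreal (Fd nrm \<Gamma> \<eta> powr p)" for \<eta>
  proof (cases "\<eta> \<in> B")
    case True
    then have h: "nrm (\<eta> - \<xi>) \<le> b * \<delta>" unfolding B_def nball_def by simp
    have "Fd nrm (insert \<xi> \<Gamma>) \<eta> \<le> nrm (\<eta> - \<xi>)"
      by (rule Fd_le) (use fin in auto)
    then have F1: "Fd nrm (insert \<xi> \<Gamma>) \<eta> \<le> b * \<delta>" using h by linarith
    obtain x where x: "x \<in> \<Gamma>" "Fd nrm \<Gamma> \<eta> = nrm (\<eta> - x)" using Fd_in[OF fin ne] by blast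
    have "\<delta> \<le> nrm (\<xi> - x)" unfolding \<delta>_def by (rule Fd_le[OF fin x(1)])
    also have "\<dots> \<le> nrm (\<xi> - \<eta>) + nrm (\<eta> - x)" by (rule nrm_tri'[OF nrm])
    finally have "\<delta> \<le> nrm (\<xi> - \<eta>) + nrm (\<eta> - x)" .
    moreover have "nrm (\<xi> - \<eta>) = nrm (\<eta> - \<xi>)" by (rule nrm_commute[OF nrm])
    ultimately have F2: "(1 - b) * \<delta> \<le> Fd nrm \<Gamma> \<eta>"
      using h x(2) by (simp add: left_diff_distrib)
    have f0: "Fd nrm (insert \<xi> \<Gamma>) \<eta> \<ge> 0" by (rule Fd_nonneg[OF nrm]) (use fin in auto)
    have "Fd nrm (insert \<xi> \<Gamma>) \<eta> powr p \<le> (b * \<delta>) powr p" using F1 f0 p by (intro powr_mono2) auto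
    also have "\<dots> = b powr p * \<delta> powr p" using b \<delta>0 by (simp add: powr_mult)
    finally have A1: "Fd nrm (insert \<xi> \<Gamma>) \<eta> powr p \<le> b powr p * \<delta> powr p" .
    have "(1-b) powr p * \<delta> powr p = ((1 - b) * \<delta>) powr p" using b \<delta>0 by (simp add: powr_mult)
    also have "\<dots> \<le> Fd nrm \<Gamma> \<eta> powr p" using F2 b \<delta>0 p by (intro powr_mono2) auto
    finally have A2: "(1-b) powr p * \<delta> powr p \<le> Fd nrm \<Gamma> \<eta> powr p" .
    have "Fd nrm (insert \<xi> \<Gamma>) \<eta> powr p + c * \<delta> powr p \<le> Fd nrm \<Gamma> \<eta> powr p"
      using A1 A2 unfolding c_def left_diff_distrib by linarith
    then show ?thesis using True c0
      by (simp add: ennreal_plus[symmetric] del: ennreal_plus)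
  next
    case False
    have f0: "Fd nrm (insert \<xi> \<Gamma>) \<eta> \<ge> 0" by (rule Fd_nonneg[OF nrm]) (use fin in auto)
    have "Fd nrm (insert \<xi> \<Gamma>) \<eta> powr p \<le> Fd nrm \<Gamma> \<eta> powr p"
      using Fd_insert_le[OF fin ne] f0 p by (intro powr_mono2) auto
    then show ?thesis using False by (simp add: ennreal_leI)
  qed
  have "Ip nrm p \<mu> (first_pts a (Suc N)) + ennreal (c * \<delta> powr p) * emeasure \<mu> B
      \<le> Ip nrm p \<mu> (insert \<xi> \<Gamma>) + ennreal (c * \<delta> powr p) * emeasure \<mu> B"
    unfolding \<mu>_def \<Gamma>_def by (intro add_right_mono greedy_Ip)
  also have "\<dots> = (\<integral>\<^sup>+ \<eta>. ennreal (Fd nrm (insert \<xi> \<Gamma>) \<eta> powr p) + ennreal (c * \<delta> powr p) * indicator B \<eta> \<partial>\<mu>)"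
    unfolding Ip_def using m1 m2 Bm by (simp add: nn_integral_add nn_integral_cmult_indicator)
  also have "\<dots> \<le> Ip nrm p \<mu> \<Gamma>" unfolding Ip_def by (intro nn_integral_mono pt)
  finally show ?thesis unfolding \<mu>_def \<Gamma>_def c_def \<delta>_def B_def .
qed

end

lemma nn_integral_cmult_le_any:
  fixes f :: "'a \<Rightarrow> ennreal"
  assumes k: "k > 0"
  shows "(\<integral>\<^sup>+x. ennreal k * f x \<partial>M) \<le> ennreal k * (\<integral>\<^sup>+x. f x \<partial>M)"
proof -
  have "integral\<^sup>S M g \<le> ennreal k * integral\<^sup>N M f"
    if g: "simple_function M g" "g \<le> (\<lambda>x. ennreal k * f x)" for g
  proof -
    define g' where "g' x = ennreal (1/k) * g x" for x
    have sg: "simple_function M g'" unfolding g'_def using g(1) by auto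
    have kk: "ennreal (1/k) * ennreal k = 1" using k by (simp add: ennreal_mult[symmetric])
    have gle: "g' x \<le> f x" for x
    proof -
      have "g' x \<le> ennreal (1/k) * (ennreal k * f x)"
        unfolding g'_def using g(2) by (intro mult_left_mono) (auto simp: le_fun_def)
      also have "\<dots> = f x" by (simp add: mult.assoc[symmetric] kk)
      finally show ?thesis .
    qed
    have geq: "g x = ennreal k * g' x" for x
      unfolding g'_def by (simp add: mult.assoc[symmetric] kk mult.commute[of "ennreal k"])
    have "integral\<^sup>S M g = integral\<^sup>S M (\<lambda>x. ennreal k * g' x)"
      by (subst geq[abs_def]) rule
    also have "\<dots> = ennreal k * integral\<^sup>S M g'" using sg by simp
    also have "integral\<^sup>S M g' = integral\<^sup>N M g'" using nn_integral_eq_simple_integral[OF sg] by simp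
    also have "\<dots> \<le> integral\<^sup>N M f" by (rule nn_integral_mono) (rule gle)
    finally show ?thesis by (simp add: mult_left_mono)
  qed
  then show ?thesis unfolding nn_integral_def[of M "\<lambda>x. ennreal k * f x"]
    by (intro SUP_least) auto
qed

lemma lborel_nball_ge:
  fixes nrm :: "'a::euclidean_space \<Rightarrow> real"
  assumes nrm: "is_norm nrm" and r: "r \<ge> 0"
  shows "ennreal ((2 * r / nC nrm) ^ DIM('a)) \<le> emeasure lborel (nball nrm \<xi> r)"
proof -
  have C: "nC nrm > 0" by (rule nC_pos[OF nrm])
  define t where "t = r / nC nrm"
  have t0: "t \<ge> 0" unfolding t_def using C r by simp
  have One: "One \<bullet> b = (1::real)" if "b \<in> (Basis :: 'a set)" for b
    using that by (simp add: inner_sum_left inner_Basis)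
  have sub: "cbox (\<xi> - t *\<^sub>R One) (\<xi> + t *\<^sub>R One) \<subseteq> nball nrm \<xi> r"
  proof
    fix y assume y: "y \<in> cbox (\<xi> - t *\<^sub>R One) (\<xi> + t *\<^sub>R One)"
    have "\<bar>(y - \<xi>) \<bullet> b\<bar> \<le> t" if b: "b \<in> Basis" for b
      using y b One[OF b] by (auto simp: mem_box inner_diff_left inner_add_left abs_le_iff)
    then have "nrm (y - \<xi>) \<le> t * nC nrm" by (rule nrm_cube[OF nrm])
    then show "y \<in> nball nrm \<xi> r" using C unfolding t_def nball_def by simp
  qed
  have "emeasure lborel (cbox (\<xi> - t *\<^sub>R One) (\<xi> + t *\<^sub>R One)) = ennreal (\<Prod>b\<in>(Basis::'a set). 2 * t)"
    using t0 One by (simp add: emeasure_lborel_cbox_eq inner_diff_left inner_add_left)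
  also have "(\<Prod>b\<in>(Basis::'a set). 2 * t) = (2 * r / nC nrm) ^ DIM('a)"
    by (simp add: t_def)
  finally have "emeasure lborel (cbox (\<xi> - t *\<^sub>R One) (\<xi> + t *\<^sub>R One)) = ennreal ((2 * r / nC nrm) ^ DIM('a))" .
  moreover have "emeasure lborel (cbox (\<xi> - t *\<^sub>R One) (\<xi> + t *\<^sub>R One)) \<le> emeasure lborel (nball nrm \<xi> r)"
    using sub nball_borel[OF nrm] by (intro emeasure_mono) auto
  ultimately show ?thesis by simp
qed

lemma one_minus_powr_ge:
  fixes x s :: real assumes "0 \<le> x" "x < 1" "s > 0"
  shows "(1 - x) powr (- s) \<ge> 1 + s * x"
proof -
  have "ln (1 - x) \<le> - x" using ln_le_minus_one[of "1 - x"] assms by simp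
  then have "s * x \<le> s * (- ln (1 - x))" using assms(3) by (intro mult_left_mono) auto
  then have "- s * ln (1 - x) \<ge> s * x" by simp
  moreover have "(1 - x) powr (- s) = exp (- s * ln (1 - x))" using assms by (simp add: powr_def)
  moreover have "exp (- s * ln (1 - x)) \<ge> 1 + (- s * ln (1 - x))" by (rule exp_ge_add_one_self)
  ultimately show ?thesis by linarith
qed

lemma seq_step:
  fixes u v k s :: real
  assumes s: "s > 0" and k: "k > 0" and u: "u > 0" and v: "v > 0"
    and rec: "v \<le> u - k * u powr (1 + s)"
  shows "v powr (- s) \<ge> u powr (- s) + s * k"
proof -
  define x where "x = k * u powr s"
  have x0: "x \<ge> 0" unfolding x_def using k by simp
  have "u powr (1 + s) = u * u powr s" using u by (simp add: powr_add)
  then have vle: "v \<le> u * (1 - x)" using rec unfolding x_def by (simp add: algebra_simps)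
  then have x1: "x < 1" using v u by (smt (verit) mult_nonneg_nonpos)
  have pos: "u * (1 - x) > 0" using x1 u by simp
  have "v powr (- s) \<ge> (u * (1 - x)) powr (- s)"
    using vle v s by (intro powr_mono2') auto
  moreover have "(u * (1 - x)) powr (- s) = u powr (- s) * (1 - x) powr (- s)"
    using u x1 by (simp add: powr_mult)
  moreover have "(1 - x) powr (- s) \<ge> 1 + s * x" by (rule one_minus_powr_ge[OF x0 x1 s])
  moreover have "u powr (- s) * (1 + s * x) = u powr (- s) + s * k"
  proof -
    have "u powr (- s) * u powr s = 1" using u by (simp add: powr_add[symmetric])
    then show ?thesis unfolding x_def by (simp add: algebra_simps)
  qed
  moreover have "u powr (- s) > 0" using u by simp
  ultimately show ?thesis
    by (smt (verit) mult_left_mono)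
qed

lemma seq_decay:
  fixes u :: "nat \<Rightarrow> real" and s A :: real
  assumes s: "s > 0" and A: "A > 0"
    and h: "\<And>N. N \<ge> 1 \<Longrightarrow> 0 \<le> u N \<and> u (Suc N) \<le> u N \<and> (u N / A) powr (1 + s) \<le> u N - u (Suc N)"
  shows "\<exists>C. \<forall>N\<ge>2. real N * u N powr s \<le> C"
proof -
  define k where "k = 1 / A powr (1 + s)"
  have k: "k > 0" unfolding k_def using A by simp
  have rec: "u (Suc N) \<le> u N - k * u N powr (1 + s)" if "N \<ge> 1" for N
  proof -
    have "(u N / A) powr (1 + s) = k * u N powr (1 + s)"
      using h[OF that] A unfolding k_def by (simp add: powr_divide)
    then show ?thesis using h[OF that] by linarith
  qed
  have claim: "u N = 0 \<or> u N powr (- s) \<ge> s * k * (real N - 1)" if "N \<ge> 1" for N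
    using that
  proof (induction N rule: dec_induct)
    case base
    then show ?case by (simp)
  next
    case (step N)
    show ?case
    proof (cases "u (Suc N) = 0")
      case True then show ?thesis by simp
    next
      case False
      have v: "u (Suc N) > 0" using False h[of "Suc N"] by force
      have u: "u N > 0" using v h[OF step(1)] by linarith
      have "u (Suc N) powr (- s) \<ge> u N powr (- s) + s * k"
        by (rule seq_step[OF s k u v rec[OF step(1)]])
      moreover have "u N powr (- s) \<ge> s * k * (real N - 1)" using step(3) u by simp
      ultimately show ?thesis by (simp add: algebra_simps)
    qed
  qed
  have "real N * u N powr s \<le> 2 / (s * k)" if N: "N \<ge> 2" for N
  proof (cases "u N = 0")
    case True then show ?thesis using s k by simp
  next
    case False
    then have u: "u N > 0" using h[of N] N by force
    have ge: "u N powr (- s) \<ge> s * k * (real N - 1)" using claim[of N] N False by auto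
    have pos: "s * k * (real N - 1) > 0" using s k N by simp
    have "u N powr s = 1 / u N powr (- s)" using u by (simp add: powr_minus divide_inverse)
    also have "\<dots> \<le> 1 / (s * k * (real N - 1))"
    proof -
      have "u N powr (- s) > 0" using ge pos by linarith
      then show ?thesis using ge pos by (intro divide_left_mono) (auto intro: mult_pos_pos)
    qed
    finally have "real N * u N powr s \<le> real N * (1 / (s * k * (real N - 1)))"
      by (intro mult_left_mono) auto
    also have "\<dots> = (real N / (real N - 1)) / (s * k)" by simp
    also have "\<dots> \<le> 2 / (s * k)"
    proof -
      have "real N / (real N - 1) \<le> 2" using N by (simp add: field_simps)
      then show ?thesis using s k by (intro divide_right_mono) auto
    qed
    finally show ?thesis .
  qed
  then show ?thesis by blast
qed

lemma nrm_shift_cont: fixes nrm :: "'a::euclidean_space \<Rightarrow> real"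
  assumes "is_norm nrm" shows "continuous_on UNIV (\<lambda>y. nrm (y - x))"
proof -
  have c1: "continuous_on UNIV (\<lambda>y::'a. y - x)" by (intro continuous_intros)
  have c2: "continuous_on ((\<lambda>y::'a. y - x) ` UNIV) nrm"
    by (rule continuous_on_subset[OF nrm_continuous[OF assms]]) simp
  show ?thesis using continuous_on_compose[OF c1 c2] by (simp add: o_def)
qed

context
  fixes nrm :: "'a::euclidean_space \<Rightarrow> real" and p :: real and M :: "'b measure"
    and X :: "'b \<Rightarrow> 'a" and a :: "nat \<Rightarrow> 'a" and b :: real
  assumes nrm: "is_norm nrm" and p: "p > 0" and M: "prob_space M" and X: "X \<in> borel_measurable M"
    and mom: "(\<integral>\<^sup>+ \<xi>. ennreal (nrm \<xi> powr p) \<partial>(distr M borel X)) < \<infinity>"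
    and greedy: "greedy_opt_seq nrm p M X a"
    and b0: "0 < b" and b1: "b < 1/2"
begin

abbreviation "uN N \<equiv> enn2real (Ip nrm p (distr M borel X) (first_pts a N))"
abbreviation "cb \<equiv> (1-b) powr p - b powr p"
abbreviation "Kc \<equiv> 1 / (cb * (2 * b / nC nrm) ^ DIM('a))"

lemma cb_pos: "cb > 0"
proof -
  have "b powr p < (1 - b) powr p" using b0 b1 p by (intro powr_less_mono2) auto
  then show ?thesis by simp
qed

lemma Kc_pos: "Kc > 0"
  using cb_pos nC_pos[OF nrm] b0 by simp

lemma Ip_eq: assumes "N \<ge> 1" shows "Ip nrm p (distr M borel X) (first_pts a N) = ennreal (uN N)"
  using Ip_fin[OF nrm p M X mom greedy first_pts_finite first_pts_ne[OF assms]]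
  by (simp add: ennreal_enn2real_if less_top)

lemma mu_meas_fin: "emeasure (distr M borel X) A = ennreal (enn2real (emeasure (distr M borel X) A))"
proof -
  interpret P: prob_space "distr M borel X" by (rule mu_prob[OF nrm p M X mom greedy])
  have "emeasure (distr M borel X) A \<noteq> top"
    using P.emeasure_le_1[of A] by (auto simp: top_unique)
  then show ?thesis by (simp add: ennreal_enn2real_if)
qed

lemma mm_real:
  assumes N: "N \<ge> 1"
  shows "uN (Suc N) + cb * Fd nrm (first_pts a N) \<xi> powr p
      * enn2real (emeasure (distr M borel X) (nball nrm \<xi> (b * Fd nrm (first_pts a N) \<xi>))) \<le> uN N"
proof -
  define m where "m = enn2real (emeasure (distr M borel X) (nball nrm \<xi> (b * Fd nrm (first_pts a N) \<xi>)))"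
  have m0: "m \<ge> 0" unfolding m_def by simp
  have c0: "cb * Fd nrm (first_pts a N) \<xi> powr p \<ge> 0" using cb_pos by simp
  have "ennreal (uN (Suc N)) + ennreal (cb * Fd nrm (first_pts a N) \<xi> powr p) * ennreal m \<le> ennreal (uN N)"
    using micro_macro[OF nrm p M X mom greedy N, of b \<xi>] b0 b1 Ip_eq[of N] Ip_eq[of "Suc N"] N
      mu_meas_fin[of "nball nrm \<xi> (b * Fd nrm (first_pts a N) \<xi>)"]
    unfolding m_def by simp
  then have "ennreal (uN (Suc N) + cb * Fd nrm (first_pts a N) \<xi> powr p * m) \<le> ennreal (uN N)"
    using m0 c0 by (simp add: ennreal_mult)
  then show ?thesis unfolding m_def by (simp add: ennreal_le_iff)
qed

lemma u_mono: "N \<ge> 1 \<Longrightarrow> uN (Suc N) \<le> uN N"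
  using mm_real[of N 0] cb_pos
  by (smt (verit) enn2real_nonneg mult_nonneg_nonneg powr_ge_zero)

lemma pointwise:
  assumes N: "N \<ge> 1" and fin: "max_fun nrm (distr M borel X) a b \<xi> < \<infinity>"
  shows "Fd nrm (first_pts a N) \<xi> powr p
    \<le> (Kc * enn2real (max_fun nrm (distr M borel X) a b \<xi>) * (uN N - uN (Suc N))) powr (p / (p + real DIM('a)))"
proof -
  define \<delta> where "\<delta> = Fd nrm (first_pts a N) \<xi>"
  define D where "D = real DIM('a)"
  define \<Delta> where "\<Delta> = uN N - uN (Suc N)"
  define \<psi> where "\<psi> = enn2real (max_fun nrm (distr M borel X) a b \<xi>)"
  have fin1: "finite (first_pts a N)" and ne1: "first_pts a N \<noteq> {}"
    using N by (auto simp: first_pts_finite first_pts_ne)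
  have \<delta>0: "\<delta> \<ge> 0" unfolding \<delta>_def by (rule Fd_nonneg[OF nrm fin1 ne1])
  have \<Delta>0: "\<Delta> \<ge> 0" unfolding \<Delta>_def using u_mono[OF N] by simp
  have \<psi>0: "\<psi> \<ge> 0" unfolding \<psi>_def by simp
  have D0: "D > 0" unfolding D_def by simp
  have C: "nC nrm > 0" by (rule nC_pos[OF nrm])
  have rhs0: "(Kc * \<psi> * \<Delta>) powr (p / (p + D)) \<ge> 0" by simp
  show ?thesis
  proof (cases "\<delta> = 0")
    case True
    then show ?thesis using rhs0 unfolding \<delta>_def \<psi>_def \<Delta>_def D_def by simp
  next
    case False
    then have \<delta>p: "\<delta> > 0" using \<delta>0 by simp
    define r where "r = b * \<delta>"
    have r0: "r > 0" unfolding r_def using b0 \<delta>p by simp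
    define B where "B = nball nrm \<xi> r"
    define L where "L = emeasure lborel B"
    define m where "m = emeasure (distr M borel X) B"
    define v where "v = (2 * r / nC nrm) ^ DIM('a)"
    have v0: "v > 0" unfolding v_def using r0 C by simp
    have dist: "dist_set nrm \<xi> (first_pts a N) = ennreal \<delta>"
      unfolding \<delta>_def by (rule dist_set_fin[OF fin1 ne1])
    have "emeasure lborel (nball nrm \<xi> (b * enn2real (dist_set nrm \<xi> (first_pts a N))))
        / emeasure (distr M borel X) (nball nrm \<xi> (b * enn2real (dist_set nrm \<xi> (first_pts a N))))
        \<le> max_fun nrm (distr M borel X) a b \<xi>"
      unfolding max_fun_def using N by (intro SUP_upper) auto
    then have Psi: "L / m \<le> max_fun nrm (distr M borel X) a b \<xi>"
      unfolding L_def m_def B_def r_def dist using \<delta>0 by simp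
    have Lge: "ennreal v \<le> L" unfolding L_def B_def v_def
      by (rule lborel_nball_ge[OF nrm]) (use r0 in simp)
    have L0: "L \<noteq> 0" using Lge v0 by (auto simp: le_zero_eq)
    have m0: "m \<noteq> 0"
    proof
      assume "m = 0"
      then have "L / m = top" using L0 by simp
      then show False using Psi fin by (simp add: top_unique)
    qed
    have mr: "m = ennreal (enn2real m)" unfolding m_def by (rule mu_meas_fin)
    have mtop: "m \<noteq> top" using mr by (metis ennreal_neq_top)
    have Ltop: "L \<noteq> top"
    proof
      assume "L = top"
      then have "L / m = top" using mtop by (simp add: ennreal_top_divide)
      then show False using Psi fin by (simp add: top_unique)
    qed
    define Lr where "Lr = enn2real L"
    define mr' where "mr' = enn2real m"
    have Le: "L = ennreal Lr" unfolding Lr_def using Ltop by (simp add: ennreal_enn2real_if)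
    have me: "m = ennreal mr'" unfolding mr'_def using mr by simp
    have "mr' \<ge> 0" unfolding mr'_def by simp
    moreover have "mr' \<noteq> 0" using m0 me by auto
    ultimately have mr0: "mr' > 0" by simp
    have Lr0: "Lr \<ge> 0" unfolding Lr_def by simp
    have Psie: "max_fun nrm (distr M borel X) a b \<xi> = ennreal \<psi>"
      unfolding \<psi>_def using fin by (simp add: ennreal_enn2real_if less_top)
    have "ennreal (Lr / mr') \<le> ennreal \<psi>" using Psi Le me Psie divide_ennreal[OF Lr0 mr0] by simp
    then have "Lr / mr' \<le> \<psi>" using \<psi>0 by (simp add: ennreal_le_iff)
    then have Lpsi: "Lr \<le> \<psi> * mr'" using mr0 by (simp add: divide_le_eq)
    have vL: "v \<le> Lr" using Lge Le Lr0 by (simp add: ennreal_le_iff)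
    have mm: "cb * \<delta> powr p * mr' \<le> \<Delta>"
      using mm_real[OF N, of \<xi>] unfolding \<Delta>_def mr'_def m_def B_def r_def \<delta>_def by simp
    have cd0: "cb * \<delta> powr p \<ge> 0" using cb_pos by simp
    have "cb * \<delta> powr p * v \<le> cb * \<delta> powr p * (\<psi> * mr')"
      using vL Lpsi cd0 by (intro mult_left_mono) auto
    also have "\<dots> = \<psi> * (cb * \<delta> powr p * mr')" by (simp add: algebra_simps)
    also have "\<dots> \<le> \<psi> * \<Delta>" using mm \<psi>0 by (intro mult_left_mono) auto
    finally have key: "cb * \<delta> powr p * v \<le> \<psi> * \<Delta>" .
    have veq: "v = (2 * b / nC nrm) ^ DIM('a) * \<delta> powr D"
      unfolding v_def r_def D_def using \<delta>p by (simp add: powr_realpow power_mult_distrib[symmetric] mult.assoc)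
    define w where "w = cb * (2 * b / nC nrm) ^ DIM('a)"
    have w0: "w > 0" unfolding w_def using cb_pos b0 C by simp
    have "w * (\<delta> powr p * \<delta> powr D) \<le> \<psi> * \<Delta>"
      using key unfolding veq w_def by (simp add: algebra_simps)
    then have X: "\<delta> powr p * \<delta> powr D \<le> (\<psi> * \<Delta>) / w"
      using w0 by (simp add: pos_le_divide_eq mult.commute)
    have "(\<psi> * \<Delta>) / w = Kc * \<psi> * \<Delta>" unfolding w_def by simp
    with X have "\<delta> powr p * \<delta> powr D \<le> Kc * \<psi> * \<Delta>" by simp
    then have e1: "\<delta> powr (p + D) \<le> Kc * \<psi> * \<Delta>" by (simp add: powr_add)
    have "\<delta> powr p = (\<delta> powr (p + D)) powr (p / (p + D))"
      using D0 p by (simp add: powr_powr)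
    also have "\<dots> \<le> (Kc * \<psi> * \<Delta>) powr (p / (p + D))"
      using e1 p D0 by (intro powr_mono2) auto
    finally show ?thesis unfolding \<delta>_def \<psi>_def \<Delta>_def D_def .
  qed
qed

lemma u_zero:
  assumes N: "N \<ge> 1" and Dz: "uN N - uN (Suc N) = 0"
  shows "uN N = 0"
proof -
  have nullb: "emeasure (distr M borel X) (nball nrm \<xi> (b * Fd nrm (first_pts a N) \<xi>)) = 0"
    if pos: "Fd nrm (first_pts a N) \<xi> > 0" for \<xi>
  proof -
    define m where "m = enn2real (emeasure (distr M borel X) (nball nrm \<xi> (b * Fd nrm (first_pts a N) \<xi>)))"
    have "uN (Suc N) + cb * Fd nrm (first_pts a N) \<xi> powr p * m \<le> uN N"
      unfolding m_def by (rule mm_real[OF N])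
    then have le: "(cb * Fd nrm (first_pts a N) \<xi> powr p) * m \<le> 0" using Dz by simp
    have cpos: "cb * Fd nrm (first_pts a N) \<xi> powr p > 0" using cb_pos pos by simp
    have "(cb * Fd nrm (first_pts a N) \<xi> powr p) * m \<le> (cb * Fd nrm (first_pts a N) \<xi> powr p) * 0"
      using le by simp
    then have "m \<le> 0" using mult_le_cancel_left_pos[OF cpos] by blast
    moreover have "m \<ge> 0" unfolding m_def by simp
    ultimately have "m = 0" by simp
    then show ?thesis using mu_meas_fin[of "nball nrm \<xi> (b * Fd nrm (first_pts a N) \<xi>)"]
      unfolding m_def by simp
  qed
  define F where "F = {U. open U \<and> emeasure (distr M borel X) U = 0}"
  have cover: "\<xi> \<in> \<Union>F" if pos: "Fd nrm (first_pts a N) \<xi> > 0" for \<xi>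
  proof -
    define U where "U = {y. nrm (y - \<xi>) < b * Fd nrm (first_pts a N) \<xi>}"
    have oU: "open U" unfolding U_def
      by (rule open_Collect_less[OF nrm_shift_cont[OF nrm] continuous_on_const])
    have sub: "U \<subseteq> nball nrm \<xi> (b * Fd nrm (first_pts a N) \<xi>)" unfolding U_def nball_def by auto
    have "emeasure (distr M borel X) U \<le> emeasure (distr M borel X) (nball nrm \<xi> (b * Fd nrm (first_pts a N) \<xi>))"
      by (rule emeasure_mono[OF sub]) (simp add: nball_borel[OF nrm])
    then have "emeasure (distr M borel X) U = 0" using nullb[OF pos] by simp
    moreover have "\<xi> \<in> U" unfolding U_def using pos b0 nrm_0[OF nrm] by simp
    ultimately show ?thesis unfolding F_def using oU by blast
  qed
  have opF: "\<And>S. S \<in> F \<Longrightarrow> open S" unfolding F_def by auto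
  obtain F' where F': "F' \<subseteq> F" "countable F'" "\<Union>F' = \<Union>F"
    using Lindelof[OF opF] by blast
  have nullU: "(\<Union>U\<in>F'. U) \<in> null_sets (distr M borel X)"
  proof (rule null_sets_UN'[OF F'(2)])
    fix U assume "U \<in> F'"
    then have "open U" "emeasure (distr M borel X) U = 0" using F'(1) unfolding F_def by auto
    then show "U \<in> null_sets (distr M borel X)" by (intro null_setsI) auto
  qed
  have AE: "AE \<xi> in distr M borel X. ennreal (Fd nrm (first_pts a N) \<xi> powr p) = 0"
  proof (rule AE_I'[OF nullU], safe)
    fix \<xi> assume h: "ennreal (Fd nrm (first_pts a N) \<xi> powr p) \<noteq> 0"
    have "Fd nrm (first_pts a N) \<xi> \<ge> 0"
      using N by (intro Fd_nonneg[OF nrm]) (auto simp: first_pts_finite first_pts_ne)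
    moreover have "Fd nrm (first_pts a N) \<xi> \<noteq> 0" using h by auto
    ultimately have "Fd nrm (first_pts a N) \<xi> > 0" by simp
    then have "\<xi> \<in> \<Union>F" by (rule cover)
    then show "\<xi> \<in> (\<Union>U\<in>F'. U)" using F'(3) by auto
  qed
  have "Ip nrm p (distr M borel X) (first_pts a N) = (\<integral>\<^sup>+ \<xi>. 0 \<partial>distr M borel X)"
    unfolding Ip_def by (rule nn_integral_cong_AE[OF AE])
  then show ?thesis by simp
qed

lemma u_bound:
  assumes N: "N \<ge> 1"
    and J: "(\<integral>\<^sup>+ \<xi>. epow (max_fun nrm (distr M borel X) a b \<xi>) (p / (p + real DIM('a))) \<partial>(distr M borel X)) < \<infinity>"
  shows "uN N \<le> (Kc powr (p / (p + real DIM('a)))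
      * enn2real (\<integral>\<^sup>+ \<xi>. epow (max_fun nrm (distr M borel X) a b \<xi>) (p / (p + real DIM('a))) \<partial>(distr M borel X)) + 1)
      * (uN N - uN (Suc N)) powr (p / (p + real DIM('a)))"
proof -
  define q where "q = p / (p + real DIM('a))"
  define Jv where "Jv = (\<integral>\<^sup>+ \<xi>. epow (max_fun nrm (distr M borel X) a b \<xi>) q \<partial>(distr M borel X))"
  define Jr where "Jr = enn2real Jv"
  define \<Delta> where "\<Delta> = uN N - uN (Suc N)"
  have q0: "q > 0" unfolding q_def using p by simp
  have Jr0: "Jr \<ge> 0" unfolding Jr_def by simp
  have Jve: "Jv = ennreal Jr" unfolding Jr_def Jv_def q_def using J by (simp add: ennreal_enn2real_if less_top)
  have \<Delta>0: "\<Delta> \<ge> 0" unfolding \<Delta>_def using u_mono[OF N] by simp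
  have main: "uN N \<le> Kc powr q * Jr * \<Delta> powr q"
  proof (cases "\<Delta> > 0")
    case True
    define k where "k = (Kc * \<Delta>) powr q"
    have kk: "Kc * \<Delta> > 0" by (rule mult_pos_pos[OF Kc_pos True])
    have k0: "k > 0" unfolding k_def by (simp only: powr_gt_zero) (use kk in \<open>metis less_irrefl\<close>)
    have pt: "ennreal (Fd nrm (first_pts a N) \<xi> powr p) \<le> ennreal k * epow (max_fun nrm (distr M borel X) a b \<xi>) q" for \<xi>
    proof (cases "max_fun nrm (distr M borel X) a b \<xi> = \<infinity>")
      case True
      then have "ennreal k * epow (max_fun nrm (distr M borel X) a b \<xi>) q = top"
        using k0 by (simp add: epow_def ennreal_mult_eq_top_iff)
      then show ?thesis by simp
    next
      case False
      define \<psi> where "\<psi> = enn2real (max_fun nrm (distr M borel X) a b \<xi>)"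
      have \<psi>0: "\<psi> \<ge> 0" unfolding \<psi>_def by simp
      have "Fd nrm (first_pts a N) \<xi> powr p \<le> (Kc * \<psi> * \<Delta>) powr q"
        using pointwise[OF N, of \<xi>] False unfolding \<psi>_def \<Delta>_def q_def by (simp add: less_top)
      also have "(Kc * \<psi> * \<Delta>) powr q = k * \<psi> powr q"
        unfolding k_def using Kc_pos \<psi>0 \<Delta>0
        by (simp add: powr_mult[symmetric] mult.commute mult.left_commute)
      finally have le: "Fd nrm (first_pts a N) \<xi> powr p \<le> k * \<psi> powr q" .
      have "epow (max_fun nrm (distr M borel X) a b \<xi>) q = ennreal (\<psi> powr q)"
        unfolding \<psi>_def epow_def using False by simp
      then have "ennreal k * epow (max_fun nrm (distr M borel X) a b \<xi>) q = ennreal (k * \<psi> powr q)"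
        using k0 by (simp add: ennreal_mult)
      then show ?thesis using le by (simp add: ennreal_leI)
    qed
    have "ennreal (uN N) = Ip nrm p (distr M borel X) (first_pts a N)" using Ip_eq[OF N] by simp
    also have "\<dots> \<le> (\<integral>\<^sup>+ \<xi>. ennreal k * epow (max_fun nrm (distr M borel X) a b \<xi>) q \<partial>(distr M borel X))"
      unfolding Ip_def by (rule nn_integral_mono) (rule pt)
    also have "\<dots> \<le> ennreal k * Jv" unfolding Jv_def by (rule nn_integral_cmult_le_any[OF k0])
    also have "\<dots> = ennreal (k * Jr)" unfolding Jve using k0 Jr0 by (simp add: ennreal_mult)
    finally have "uN N \<le> k * Jr" using k0 Jr0 by (simp add: ennreal_le_iff)
    also have "k * Jr = Kc powr q * Jr * \<Delta> powr q"
    proof -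
      have "(Kc * \<Delta>) powr q = Kc powr q * \<Delta> powr q"
        by (rule powr_mult)
      then show ?thesis unfolding k_def by (simp only: ac_simps)
    qed
    finally show ?thesis .
  next
    case False
    then have "\<Delta> = 0" using \<Delta>0 by simp
    then have "uN N = 0" using u_zero[OF N] unfolding \<Delta>_def by simp
    then show ?thesis using \<open>\<Delta> = 0\<close> by simp
  qed
  have "Kc powr q * Jr * \<Delta> powr q \<le> (Kc powr q * Jr + 1) * \<Delta> powr q"
    by (simp add: distrib_right)
  with main show ?thesis unfolding q_def Jr_def Jv_def \<Delta>_def by simp
qed

end

theorem theorem3p1:
  fixes nrm :: "'a::euclidean_space \<Rightarrow> real"
    and p :: real
    and M :: "'b measure"
    and X :: "'b \<Rightarrow> 'a"
    and a :: "nat \<Rightarrow> 'a"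
  assumes "is_norm nrm"
    and "p > 0"
    and "prob_space M"
    and "X \<in> borel_measurable M"
    and "(\<integral>\<^sup>+ \<xi>. ennreal (nrm \<xi> powr p) \<partial>(distr M borel X)) < \<infinity>"
    and "greedy_opt_seq nrm p M X a"
    and "\<exists>b. 0 < b \<and> b < 1/2 \<and>
           (\<integral>\<^sup>+ \<xi>. epow (max_fun nrm (distr M borel X) a b \<xi>) (p / (p + real DIM('a))) \<partial>(distr M borel X)) < \<infinity>"
  shows "limsup (\<lambda>N. ennreal (real N powr (1 / real DIM('a))) * quant_err nrm p M X (first_pts a N)) < \<infinity>"
proof -
  note nrm = assms(1) and p = assms(2) and M = assms(3) and X = assms(4) and mom = assms(5)
    and greedy = assms(6)
  from assms(7) obtain b where b0: "0 < b" and b1: "b < 1/2"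
    and J: "(\<integral>\<^sup>+ \<xi>. epow (max_fun nrm (distr M borel X) a b \<xi>) (p / (p + real DIM('a))) \<partial>(distr M borel X)) < \<infinity>"
    by blast
  define D where "D = real DIM('a)"
  have D0: "D > 0" unfolding D_def by simp
  define q where "q = p / (p + D)"
  have q0: "q > 0" unfolding q_def using p D0 by simp
  define u where "u N = enn2real (Ip nrm p (distr M borel X) (first_pts a N))" for N
  define A where "A = (1 / (((1-b) powr p - b powr p) * (2 * b / nC nrm) ^ DIM('a))) powr q
      * enn2real (\<integral>\<^sup>+ \<xi>. epow (max_fun nrm (distr M borel X) a b \<xi>) q \<partial>(distr M borel X)) + 1"
  have A1: "A \<ge> 1" unfolding A_def by simp
  have ub: "u N \<le> A * (u N - u (Suc N)) powr q" if N: "N \<ge> 1" for N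
    using u_bound[OF nrm p M X mom greedy b0 b1 N J] unfolding u_def A_def q_def D_def .
  have mono: "u (Suc N) \<le> u N" if N: "N \<ge> 1" for N
    using u_mono[OF nrm p M X mom greedy b0 b1 N] unfolding u_def .
  have rec: "0 \<le> u N \<and> u (Suc N) \<le> u N \<and> (u N / A) powr (1 + D / p) \<le> u N - u (Suc N)"
    if N: "N \<ge> 1" for N
  proof (intro conjI)
    show "0 \<le> u N" unfolding u_def by simp
    show "u (Suc N) \<le> u N" by (rule mono[OF N])
    define \<Delta> where "\<Delta> = u N - u (Suc N)"
    have \<Delta>0: "\<Delta> \<ge> 0" unfolding \<Delta>_def using mono[OF N] by simp
    have "u N / A \<le> \<Delta> powr q" using ub[OF N] A1 unfolding \<Delta>_def by (simp add: divide_le_eq mult.commute)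
    then have "(u N / A) powr (1 / q) \<le> (\<Delta> powr q) powr (1 / q)"
      using A1 q0 unfolding u_def by (intro powr_mono2) auto
    also have "\<dots> = \<Delta>" using q0 \<Delta>0 by (simp add: powr_powr powr_one)
    also have "1 / q = 1 + D / p" unfolding q_def using p D0 by (simp add: field_simps)
    finally show "(u N / A) powr (1 + D / p) \<le> u N - u (Suc N)" unfolding \<Delta>_def .
  qed
  obtain C where C: "\<And>N. N \<ge> 2 \<Longrightarrow> real N * u N powr (D / p) \<le> C"
    using seq_decay[of "D / p" A u] D0 p A1 rec by auto
  have bound: "ennreal (real N powr (1 / real DIM('a))) * quant_err nrm p M X (first_pts a N)
      \<le> ennreal (max C 0 powr (1 / D))" if N: "N \<ge> 2" for N
  proof -
    have N1: "N \<ge> 1" using N by simp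
    have "quant_err nrm p M X (first_pts a N) = epow (Ip nrm p (distr M borel X) (first_pts a N)) (1/p)"
      by (rule qe_eq[OF nrm p M X mom greedy first_pts_finite first_pts_ne[OF N1]])
    also have "\<dots> = epow (ennreal (u N)) (1/p)"
      using Ip_eq[OF nrm p M X mom greedy b0 b1 N1] unfolding u_def by simp
    also have "\<dots> = ennreal (u N powr (1/p))" unfolding u_def by (simp add: epow_ennreal)
    finally have qe: "quant_err nrm p M X (first_pts a N) = ennreal (u N powr (1/p))" .
    have u0: "u N \<ge> 0" unfolding u_def by simp
    have "real N powr (1 / D) * u N powr (1/p) = (real N * u N powr (D / p)) powr (1 / D)"
      using D0 p u0 by (simp add: powr_mult powr_powr)
    also have "\<dots> \<le> max C 0 powr (1 / D)"
      using C[OF N] D0 u0 by (intro powr_mono2) auto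
    finally have le: "real N powr (1 / D) * u N powr (1/p) \<le> max C 0 powr (1 / D)" .
    show ?thesis unfolding qe D_def[symmetric]
      using le by (simp add: ennreal_mult[symmetric] ennreal_leI)
  qed
  have "limsup (\<lambda>N. ennreal (real N powr (1 / real DIM('a))) * quant_err nrm p M X (first_pts a N))
      \<le> ennreal (max C 0 powr (1 / D))"
    by (rule Limsup_bounded) (use bound in \<open>auto simp: eventually_sequentially\<close>)
  then show ?thesis by (simp add: le_less_trans)
qed

end
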